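(* For every $n\in\mathbb{N}$ and every $0\le \rho\le \tfrac12$, let $d=2^n+1$ and $W=\{x\in\mathbb{R}^d:\|x\|\le 1\}$. Then there exist an instance set $\mathcal{Z}$, a distribution $\mathcal{D}$ over $\mathcal{Z}$, and a loss $f:\mathbb{R}^d\times\mathcal{Z}\to\mathbb{R}$ such that for every $z$, $f(\cdot,z)$ is non-negative, convex, $1$-Lipschitz on $W$, $1$-smooth and $\rho$-flat, with the following property: with probability at least $\tfrac12$ over the i.i.d. training set $S=(z_1,\dots,z_n)\sim\mathcal{D}^n$, there exist $w^{(1)},w^{(2)}\in\arg\min_{w\in W}F_S(w)$ such that (i) for every $r\ge 0$, $w^{(1)}\in\arg\min_{w\in W}F_S^{r}(w)$ (in particular, if $r\le\rho$, $w^{(1)}$ is an $r$-flat minimum of $F_S$); (ii) $w^{(2)}$ is sharp: $F_S^{\delta}(w^{(2)})\ge F_S(w^{(2)})+\tfrac12\delta^2$ for every $\delta>0$; (iii) $F(w^{(1)})-F(w^\star)\ge c$ for a universal constant $c>0$ (e.g. $c=1/16$), while $F(w^{(2)})-F(w^\star)=0$, where $w^\star\in\arg\min_{w\in W}F(w)$.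
   Context: Norms are Euclidean. For a loss $f(w,z)$ and distribution $\mathcal{D}$, the population risk is $F(w)=\mathbb{E}_{z\sim\mathcal{D}}[f(w,z)]$, and for a sample $S=(z_1,\dots,z_n)$ the empirical risk is $F_S(w)=\frac1n\sum_{i=1}^n f(w,z_i)$. The sharpness-aware empirical risk with radius $r\ge0$ is $F_S^{r}(w)=\max_{v:\|v\|\le r}F_S(w+v)$. A function is $\beta$-smooth if its gradient is $\beta$-Lipschitz. For $\rho\ge0$, a point $w^\star$ is a $\rho$-flat minimum of a non-negative function $g:\mathbb{R}^d\to\mathbb{R}$ if $g(w)=0$ for every $w$ with $\|w-w^\star\|\le\rho$; $g$ is called $\rho$-flat if it has a $\rho$-flat minimum. *)

theory Defs
  imports "HOL-Analysis.Analysis" "HOL-Probability.Probability"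
begin

definition emp_risk :: "('a \<Rightarrow> 'z \<Rightarrow> real) \<Rightarrow> nat \<Rightarrow> (nat \<Rightarrow> 'z) \<Rightarrow> 'a \<Rightarrow> real" where
  "emp_risk f n S w = (\<Sum>i<n. f w (S i)) / real n"

definition pop_risk :: "('a \<Rightarrow> 'z \<Rightarrow> real) \<Rightarrow> 'z measure \<Rightarrow> 'a \<Rightarrow> real" where
  "pop_risk f D w = (\<integral>z. f w z \<partial>D)"

definition sa_risk :: "('a::real_normed_vector \<Rightarrow> real) \<Rightarrow> real \<Rightarrow> 'a \<Rightarrow> real" where
  "sa_risk g r w = (SUP v\<in>cball 0 r. g (w + v))"

definition argmin_on :: "'a set \<Rightarrow> ('a \<Rightarrow> real) \<Rightarrow> 'a set" where
  "argmin_on W g = {w \<in> W. \<forall>v\<in>W. g w \<le> g v}"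

definition smooth_fun :: "real \<Rightarrow> ('a::real_inner \<Rightarrow> real) \<Rightarrow> bool" where
  "smooth_fun \<beta> g \<longleftrightarrow> (\<exists>G. (\<forall>x. (g has_derivative (\<lambda>h. G x \<bullet> h)) (at x)) \<and>
      (\<forall>x y. norm (G x - G y) \<le> \<beta> * norm (x - y)))"

definition flat_min :: "('a::real_normed_vector \<Rightarrow> real) \<Rightarrow> real \<Rightarrow> 'a \<Rightarrow> bool" where
  "flat_min g \<rho> w0 \<longleftrightarrow> (\<forall>w. norm (w - w0) \<le> \<rho> \<longrightarrow> g w = 0)"

definition flat_fun :: "('a::real_normed_vector \<Rightarrow> real) \<Rightarrow> real \<Rightarrow> bool" where
  "flat_fun g \<rho> \<longleftrightarrow> (\<exists>w0. flat_min g \<rho> w0)"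

end

theory Submission
  imports Defs
begin


lemma deriv_quad_bound:
  fixes g :: "real \<Rightarrow> real"
  assumes "\<And>y. \<bar>g y - g x - D * (y - x)\<bar> \<le> (y - x)\<^sup>2"
  shows "(g has_real_derivative D) (at x)"
proof -
  have "((\<lambda>y. (g y - g x) / (y - x)) \<longlongrightarrow> D) (at x)"
  proof (rule metric_tendsto_imp_tendsto)
    show "((\<lambda>y. y) \<longlongrightarrow> x) (at x)" by (rule tendsto_ident_at)
    show "\<forall>\<^sub>F y in at x. dist ((g y - g x) / (y - x)) D \<le> dist y x"
    proof (rule eventually_at_filter[THEN iffD2], rule always_eventually, intro allI impI)
      fix y assume "y \<noteq> x"
      then have ne: "y - x \<noteq> 0" by simp
      have "(g y - g x) / (y - x) - D = (g y - g x - D * (y - x)) / (y - x)"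
        using ne by (simp add: field_simps)
      then have "\<bar>(g y - g x) / (y - x) - D\<bar> = \<bar>g y - g x - D * (y - x)\<bar> / \<bar>y - x\<bar>"
        by (simp add: abs_divide)
      also have "\<dots> \<le> (y - x)\<^sup>2 / \<bar>y - x\<bar>"
        by (rule divide_right_mono[OF assms abs_ge_zero])
      also have "\<dots> = \<bar>y - x\<bar>\<^sup>2 / \<bar>y - x\<bar>" by simp
      also have "\<dots> = \<bar>y - x\<bar>" using ne by (cases "y > x") (simp_all add: power2_eq_square field_simps)
      finally show "dist ((g y - g x) / (y - x)) D \<le> dist y x" by (simp add: dist_real_def)
    qed
  qed
  then show ?thesis by (simp add: has_field_derivative_iff)
qed

definition pp :: "real \<Rightarrow> real" where "pp s = (max 0 s)\<^sup>2 / 2"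

lemma pp_quad: "\<bar>pp y - pp x - max 0 x * (y - x)\<bar> \<le> (y - x)\<^sup>2"
proof (cases "0 \<le> x")
  case True
  show ?thesis
  proof (cases "0 \<le> y")
    case True
    then have e: "pp y - pp x - max 0 x * (y - x) = (y - x)\<^sup>2 / 2"
      using \<open>0 \<le> x\<close> by (simp add: pp_def power2_eq_square algebra_simps)
    show ?thesis unfolding e by simp
  next
    case False
    then have e: "pp y - pp x - max 0 x * (y - x) = x * x / 2 - x * y"
      using \<open>0 \<le> x\<close> by (simp add: pp_def power2_eq_square algebra_simps)
    have "0 \<le> x * x" by simp
    moreover have "x * y \<le> 0" using False \<open>0 \<le> x\<close> by (simp add: mult_nonneg_nonpos)
    moreover have "0 \<le> y * y" by simp
    ultimately have a: "\<bar>x * x / 2 - x * y\<bar> = x * x / 2 - x * y" by (intro abs_of_nonneg) linarith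
    have "(y - x)\<^sup>2 = y * y - 2 * (x * y) + x * x" by (simp add: power2_eq_square algebra_simps)
    then show ?thesis unfolding e a using \<open>x * y \<le> 0\<close> \<open>0 \<le> y * y\<close> \<open>0 \<le> x * x\<close> by linarith
  qed
next
  case False
  show ?thesis
  proof (cases "0 \<le> y")
    case True
    then have e: "pp y - pp x - max 0 x * (y - x) = y * y / 2"
      using False by (simp add: pp_def power2_eq_square algebra_simps)
    have "x * y \<le> 0" using False True by (simp add: mult_nonpos_nonneg)
    moreover have "0 \<le> y * y" "0 \<le> x * x" by simp_all
    have "(y - x)\<^sup>2 = y * y - 2 * (x * y) + x * x" by (simp add: power2_eq_square algebra_simps)
    moreover have "\<bar>y * y / 2\<bar> = y * y / 2" by simp
    ultimately show ?thesis unfolding e using \<open>x * y \<le> 0\<close> \<open>0 \<le> y * y\<close> \<open>0 \<le> x * x\<close> by linarith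
  next
    case False
    then show ?thesis using \<open>\<not> 0 \<le> x\<close> by (simp add: pp_def)
  qed
qed

lemma pp_deriv: "(pp has_real_derivative (max 0 s)) (at s)"
  by (rule deriv_quad_bound) (rule pp_quad)

definition phi :: "real \<Rightarrow> real \<Rightarrow> real" where
  "phi r t = pp (t - r) + pp (- t - r)"
definition dphi :: "real \<Rightarrow> real \<Rightarrow> real" where
  "dphi r t = max 0 (t - r) - max 0 (- t - r)"

lemma phi_deriv: "(phi r has_real_derivative dphi r t) (at t)"
proof -
  have 1: "((\<lambda>t. pp (t - r)) has_real_derivative max 0 (t - r) * 1) (at t)"
    by (rule DERIV_chain2[OF pp_deriv]) (auto intro!: derivative_eq_intros)
  have 2: "((\<lambda>t. pp (- t - r)) has_real_derivative max 0 (- t - r) * (- 1)) (at t)"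
    by (rule DERIV_chain2[OF pp_deriv]) (auto intro!: derivative_eq_intros)
  show ?thesis using DERIV_add[OF 1 2] unfolding phi_def[abs_def] dphi_def by simp
qed

lemma pp_nonneg: "0 \<le> pp s" by (simp add: pp_def)
lemma pp_zero: "s \<le> 0 \<Longrightarrow> pp s = 0" by (simp add: pp_def)
lemma phi_nonneg: "0 \<le> phi r t" by (simp add: phi_def pp_nonneg)
lemma phi_zero: "\<bar>t\<bar> \<le> r \<Longrightarrow> phi r t = 0" by (simp add: phi_def pp_zero)
lemma phi_even: "phi r (- t) = phi r t" by (simp add: phi_def)
lemma phi_at: "0 \<le> r \<Longrightarrow> 0 \<le> d \<Longrightarrow> phi r (r + d) = d\<^sup>2 / 2"
  by (simp add: phi_def pp_def)

lemma dphi_abs: "0 \<le> r \<Longrightarrow> \<bar>dphi r t\<bar> \<le> \<bar>t\<bar>"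
  by (simp add: dphi_def max_def)
lemma dphi_lip: "0 \<le> r \<Longrightarrow> \<bar>dphi r s - dphi r t\<bar> \<le> \<bar>s - t\<bar>"
  by (simp add: dphi_def max_def)
lemma dphi_mono: "0 \<le> r \<Longrightarrow> s \<le> t \<Longrightarrow> dphi r s \<le> dphi r t"
  by (simp add: dphi_def max_def)

lemma phi_convex: "0 \<le> r \<Longrightarrow> convex_on UNIV (phi r)"
  by (rule convex_on_realI[where f'="dphi r"]) (auto intro: phi_deriv dphi_mono)



definition fK :: "real \<Rightarrow> 'a::euclidean_space set \<Rightarrow> 'a \<Rightarrow> real" where
  "fK r K w = (\<Sum>b\<in>K. phi r (w \<bullet> b))"
definition GK :: "real \<Rightarrow> 'a::euclidean_space set \<Rightarrow> 'a \<Rightarrow> 'a" where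
  "GK r K w = (\<Sum>b\<in>K. dphi r (w \<bullet> b) *\<^sub>R b)"

lemma fK_deriv: "(fK r K has_derivative (\<lambda>h. GK r K w \<bullet> h)) (at w)"
proof -
  have "((\<lambda>w. \<Sum>b\<in>K. phi r (w \<bullet> b)) has_derivative (\<lambda>h. \<Sum>b\<in>K. dphi r (w \<bullet> b) * (h \<bullet> b))) (at w)"
  proof (rule has_derivative_sum)
    fix b assume "b \<in> K"
    have l: "((\<lambda>w. w \<bullet> b) has_derivative (\<lambda>h. h \<bullet> b)) (at w)"
      by (rule bounded_linear_imp_has_derivative) (rule bounded_linear_inner_left)
    have "(phi r has_derivative (*) (dphi r (w \<bullet> b))) (at (w \<bullet> b))"
      using phi_deriv[of r "w \<bullet> b"] by (simp add: has_field_derivative_def)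
    from has_derivative_compose[OF l this]
    show "((\<lambda>w. phi r (w \<bullet> b)) has_derivative (\<lambda>h. dphi r (w \<bullet> b) * (h \<bullet> b))) (at w)"
      by simp
  qed
  moreover have "(\<lambda>h. \<Sum>b\<in>K. dphi r (w \<bullet> b) * (h \<bullet> b)) = (\<lambda>h. GK r K w \<bullet> h)"
    by (auto simp: GK_def inner_sum_left inner_sum_right inner_commute)
  ultimately show ?thesis unfolding fK_def[abs_def] by simp
qed

lemma norm_sum_basis:
  fixes K :: "'a::euclidean_space set"
  assumes "K \<subseteq> Basis"
  shows "(norm (\<Sum>b\<in>K. c b *\<^sub>R b))\<^sup>2 = (\<Sum>b\<in>K. (c b)\<^sup>2)"
proof -
  have fin: "finite K" using assms finite_Basis finite_subset by blast
  have "(norm (\<Sum>b\<in>K. c b *\<^sub>R b))\<^sup>2 = (\<Sum>b\<in>K. c b *\<^sub>R b) \<bullet> (\<Sum>b\<in>K. c b *\<^sub>R b)"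
    by (simp add: power2_norm_eq_inner)
  also have "\<dots> = (\<Sum>b\<in>K. \<Sum>b'\<in>K. c b * (c b' * (b' \<bullet> b)))"
    by (simp add: inner_sum_left inner_sum_right sum_distrib_left mult.assoc)
  also have "\<dots> = (\<Sum>b\<in>K. \<Sum>b'\<in>K. if b' = b then c b * c b else 0)"
  proof (intro sum.cong refl)
    fix b b' assume "b \<in> K" "b' \<in> K"
    then have "b \<in> Basis" "b' \<in> Basis" using assms by auto
    then show "c b * (c b' * (b' \<bullet> b)) = (if b' = b then c b * c b else 0)"
      by (auto simp: inner_Basis)
  qed
  also have "\<dots> = (\<Sum>b\<in>K. (c b)\<^sup>2)"
    using fin by (simp add: power2_eq_square)
  finally show ?thesis .
qed

lemma bessel_basis:
  fixes K :: "'a::euclidean_space set"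
  assumes "K \<subseteq> Basis"
  shows "(\<Sum>b\<in>K. (v \<bullet> b)\<^sup>2) \<le> (norm v)\<^sup>2"
proof -
  have "(\<Sum>b\<in>K. (v \<bullet> b)\<^sup>2) \<le> (\<Sum>b\<in>Basis. (v \<bullet> b)\<^sup>2)"
    by (rule sum_mono2) (use assms in auto)
  also have "\<dots> = v \<bullet> v" by (simp add: euclidean_inner[of v v] power2_eq_square)
  also have "\<dots> = (norm v)\<^sup>2" by (simp add: power2_norm_eq_inner)
  finally show ?thesis .
qed

lemma GK_norm:
  fixes K :: "'a::euclidean_space set"
  assumes "K \<subseteq> Basis" "0 \<le> r"
  shows "norm (GK r K w) \<le> norm w"
proof -
  have "(norm (GK r K w))\<^sup>2 = (\<Sum>b\<in>K. (dphi r (w \<bullet> b))\<^sup>2)"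
    unfolding GK_def by (rule norm_sum_basis[OF assms(1)])
  also have "\<dots> \<le> (\<Sum>b\<in>K. (w \<bullet> b)\<^sup>2)"
    by (intro sum_mono) (simp add: abs_le_square_iff[symmetric] dphi_abs[OF assms(2)])
  also have "\<dots> \<le> (norm w)\<^sup>2" by (rule bessel_basis[OF assms(1)])
  finally have "(norm (GK r K w))\<^sup>2 \<le> (norm w)\<^sup>2" .
  then show ?thesis by (rule power2_le_imp_le) simp
qed

lemma GK_lip:
  fixes K :: "'a::euclidean_space set"
  assumes "K \<subseteq> Basis" "0 \<le> r"
  shows "norm (GK r K x - GK r K y) \<le> norm (x - y)"
proof -
  have "GK r K x - GK r K y = (\<Sum>b\<in>K. (dphi r (x \<bullet> b) - dphi r (y \<bullet> b)) *\<^sub>R b)"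
    by (simp add: GK_def sum_subtractf scaleR_diff_left)
  then have "(norm (GK r K x - GK r K y))\<^sup>2 = (\<Sum>b\<in>K. (dphi r (x \<bullet> b) - dphi r (y \<bullet> b))\<^sup>2)"
    using norm_sum_basis[OF assms(1)] by simp
  also have "\<dots> \<le> (\<Sum>b\<in>K. ((x - y) \<bullet> b)\<^sup>2)"
  proof (intro sum_mono)
    fix b
    have "\<bar>dphi r (x \<bullet> b) - dphi r (y \<bullet> b)\<bar> \<le> \<bar>(x - y) \<bullet> b\<bar>"
      using dphi_lip[OF assms(2)] by (simp add: inner_diff_left)
    then show "(dphi r (x \<bullet> b) - dphi r (y \<bullet> b))\<^sup>2 \<le> ((x - y) \<bullet> b)\<^sup>2"
      by (simp add: abs_le_square_iff)
  qed
  also have "\<dots> \<le> (norm (x - y))\<^sup>2" by (rule bessel_basis[OF assms(1)])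
  finally have "(norm (GK r K x - GK r K y))\<^sup>2 \<le> (norm (x - y))\<^sup>2" .
  then show ?thesis by (rule power2_le_imp_le) simp
qed

lemma fK_smooth:
  fixes K :: "'a::euclidean_space set"
  assumes "K \<subseteq> Basis" "0 \<le> r"
  shows "smooth_fun 1 (fK r K)"
  unfolding smooth_fun_def
  using fK_deriv GK_lip[OF assms] by auto

lemma fK_lipschitz:
  fixes K :: "'a::euclidean_space set"
  assumes "K \<subseteq> Basis" "0 \<le> r"
  shows "1-lipschitz_on (cball 0 1) (fK r K)"
proof (rule lipschitz_onI)
  fix x y :: 'a assume x: "x \<in> cball 0 1" and y: "y \<in> cball 0 1"
  have "norm (fK r K x - fK r K y) \<le> 1 * norm (x - y)"
  proof (rule differentiable_bound[where f' = "\<lambda>w h. GK r K w \<bullet> h"])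
    show "convex (cball (0::'a) 1)" by simp
    show "(fK r K has_derivative (\<lambda>h. GK r K w \<bullet> h)) (at w within cball 0 1)" for w
      using fK_deriv has_derivative_at_withinI by blast
    show "onorm (\<lambda>h. GK r K w \<bullet> h) \<le> 1" if "w \<in> cball 0 1" for w
    proof (rule onorm_le)
      fix h
      have "norm (GK r K w \<bullet> h) \<le> norm (GK r K w) * norm h"
        by (simp add: Cauchy_Schwarz_ineq2)
      also have "\<dots> \<le> 1 * norm h"
        using GK_norm[OF assms, of w] that by (intro mult_right_mono) auto
      finally show "norm (GK r K w \<bullet> h) \<le> 1 * norm h" .
    qed
  qed (use x y in auto)
  then show "dist (fK r K x) (fK r K y) \<le> 1 * dist x y" by (simp add: dist_norm)
qed simp

lemma fK_convex:
  fixes K :: "'a::euclidean_space set"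
  assumes "0 \<le> r"
  shows "convex_on UNIV (fK r K)"
proof (rule convex_onI)
  fix t :: real and x y :: 'a assume t: "0 < t" "t < 1"
  have "fK r K ((1 - t) *\<^sub>R x + t *\<^sub>R y) \<le> (\<Sum>b\<in>K. (1 - t) * phi r (x \<bullet> b) + t * phi r (y \<bullet> b))"
    unfolding fK_def
  proof (intro sum_mono)
    fix b
    have "phi r (((1 - t) *\<^sub>R x + t *\<^sub>R y) \<bullet> b) = phi r ((1 - t) * (x \<bullet> b) + t * (y \<bullet> b))"
      by (simp add: inner_add_left)
    also have "\<dots> \<le> (1 - t) * phi r (x \<bullet> b) + t * phi r (y \<bullet> b)"
      using convex_onD[OF phi_convex[OF assms], of t "x \<bullet> b" "y \<bullet> b"] t by simp
    finally show "phi r (((1 - t) *\<^sub>R x + t *\<^sub>R y) \<bullet> b) \<le> (1 - t) * phi r (x \<bullet> b) + t * phi r (y \<bullet> b)" .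
  qed
  also have "\<dots> = (1 - t) * fK r K x + t * fK r K y"
    by (simp add: fK_def sum.distrib sum_distrib_left)
  finally show "fK r K ((1 - t) *\<^sub>R x + t *\<^sub>R y) \<le> (1 - t) * fK r K x + t * fK r K y" .
qed simp

lemma fK_nonneg: "0 \<le> fK r K w"
  by (simp add: fK_def sum_nonneg phi_nonneg)

lemma fK_flat:
  fixes K :: "'a::euclidean_space set"
  assumes "K \<subseteq> Basis" "norm w \<le> r"
  shows "fK r K w = 0"
  unfolding fK_def
proof (intro sum.neutral ballI)
  fix b assume "b \<in> K"
  then have "\<bar>w \<bullet> b\<bar> \<le> norm w" using assms(1) Basis_le_norm by blast
  then show "phi r (w \<bullet> b) = 0" using assms(2) by (intro phi_zero) simp
qed

lemma fK_flat_fun: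
  fixes K :: "'a::euclidean_space set"
  assumes "K \<subseteq> Basis"
  shows "flat_fun (fK r K) r"
  unfolding flat_fun_def flat_min_def
  using fK_flat[OF assms] by (intro exI[of _ 0]) simp

lemma fK_even: "fK r K (- w) = fK r K w"
  by (simp add: fK_def phi_even[of r "w \<bullet> _", symmetric])

lemma fK_shift:
  fixes K :: "'a::euclidean_space set"
  assumes "K \<subseteq> Basis" "b0 \<in> Basis" "b0 \<notin> K"
  shows "fK r K (w + c *\<^sub>R b0) = fK r K w"
  unfolding fK_def
proof (intro sum.cong refl)
  fix b assume "b \<in> K"
  then have "b0 \<bullet> b = 0" using assms by (metis inner_not_same_Basis subsetD)
  then show "phi r ((w + c *\<^sub>R b0) \<bullet> b) = phi r (w \<bullet> b)" by (simp add: inner_add_left)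
qed



lemma PiM_unif:
  fixes B :: "'b set" and I :: "'i set"
  assumes B: "finite B" "B \<noteq> {}" and I: "finite I" and A: "A \<subseteq> PiE I (\<lambda>_. B)"
  shows "A \<in> sets (PiM I (\<lambda>_. uniform_count_measure B))"
    and "measure (PiM I (\<lambda>_. uniform_count_measure B)) A = card A / card B ^ card I"
proof -
  let ?M = "PiM I (\<lambda>_. uniform_count_measure B)"
  have psf: "product_sigma_finite (\<lambda>_::'i. uniform_count_measure B)"
    by (simp add: product_sigma_finite_def prob_space_imp_sigma_finite prob_space_uniform_count_measure B)
  have sing: "{x} = PiE I (\<lambda>i. {x i})" if "x \<in> PiE I (\<lambda>_. B)" for x
    using that by (simp add: PiE_singleton PiE_iff)
  have singS: "{x} \<in> sets ?M" if "x \<in> PiE I (\<lambda>_. B)" for x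
    unfolding sing[OF that] using that I
    by (intro sets_PiM_I_finite) (auto simp: sets_uniform_count_measure PiE_iff)
  have singM: "emeasure ?M {x} = ennreal ((1 / card B) ^ card I)" if "x \<in> PiE I (\<lambda>_. B)" for x
  proof -
    have "emeasure ?M {x} = (\<Prod>i\<in>I. emeasure (uniform_count_measure B) {x i})"
      unfolding sing[OF that] using that I
      by (intro product_sigma_finite.emeasure_PiM[OF psf]) (auto simp: sets_uniform_count_measure PiE_iff)
    also have "\<dots> = (\<Prod>i\<in>I. ennreal (1 / card B))"
      using that B by (intro prod.cong refl) (auto simp: emeasure_uniform_count_measure PiE_iff)
    also have "\<dots> = ennreal ((1 / card B) ^ card I)"
      by (simp add: ennreal_power)
    finally show ?thesis .
  qed
  have "finite (PiE I (\<lambda>_. B))" using I B by (intro finite_PiE) auto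
  then have finA: "finite A" by (rule finite_subset[OF A])
  have "A = (\<Union>x\<in>A. {x})" by auto
  also have "\<dots> \<in> sets ?M" using finA singS A by (intro sets.finite_UN) auto
  finally show As: "A \<in> sets ?M" .
  have "measure ?M A = (\<Sum>x\<in>A. measure ?M {x})"
    using finA singS singM A by (intro measure_eq_sum_singleton) auto
  also have "\<dots> = (\<Sum>x\<in>A. (1 / card B) ^ card I)"
    using singM A by (intro sum.cong refl) (auto simp: measure_def)
  also have "\<dots> = card A / card B ^ card I" by (simp add: power_divide)
  finally show "measure ?M A = card A / card B ^ card I" .
qed

lemma card_cover:
  fixes n N :: nat
  shows "card {S \<in> PiE {..<n} (\<lambda>_. Pow {..<N}). \<forall>j<N. \<exists>i<n. j \<in> S i} = (2 ^ n - 1) ^ N"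
proof -
  let ?C = "{S \<in> PiE {..<n} (\<lambda>_. Pow {..<N}). \<forall>j<N. \<exists>i<n. j \<in> S i}"
  let ?Y = "PiE {..<N} (\<lambda>_. Pow {..<n} - {{}})"
  define T where "T S = (\<lambda>j\<in>{..<N}. {i\<in>{..<n}. j \<in> S i})" for S :: "nat \<Rightarrow> nat set"
  define U where "U Y = (\<lambda>i\<in>{..<n}. {j\<in>{..<N}. i \<in> Y j})" for Y :: "nat \<Rightarrow> nat set"
  have "bij_betw T ?C ?Y"
  proof (rule bij_betw_byWitness[where f'=U])
    show "\<forall>a\<in>?C. U (T a) = a"
      by (auto simp: T_def U_def PiE_iff extensional_def fun_eq_iff)
    show "\<forall>a\<in>?Y. T (U a) = a"
      by (auto simp: T_def U_def PiE_iff extensional_def fun_eq_iff)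
    show "T ` ?C \<subseteq> ?Y"
      by (auto simp: T_def PiE_iff)
    show "U ` ?Y \<subseteq> ?C"
      by (auto simp: U_def PiE_iff) blast
  qed
  then have "card ?C = card ?Y" by (rule bij_betw_same_card)
  also have "\<dots> = (2 ^ n - 1) ^ N"
    by (simp add: card_PiE card_Pow)
  finally show ?thesis .
qed

lemma exp_bound: "(1 - 1 / real N) ^ N \<le> 1 / 2" if "N \<ge> 1"
proof -
  have "(1 - 1 / real N) ^ N \<le> exp (- 1 / real N) ^ N"
    using that exp_ge_add_one_self[of "- 1 / real N"] by (intro power_mono) auto
  also have "\<dots> = exp (real N * (- 1 / real N))" by (rule exp_of_nat_mult[symmetric])
  also have "\<dots> = exp (- 1)" using that by simp
  also have "\<dots> = 1 / exp 1" by (simp add: exp_minus field_simps)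
  also have "\<dots> \<le> 1 / 2" using exp_ge_add_one_self[of 1] by (intro divide_left_mono) auto
  finally show ?thesis .
qed

lemma prob_uncovered:
  fixes n :: nat
  defines "N \<equiv> (2::nat) ^ n"
  shows "measure (PiM {..<n} (\<lambda>_. uniform_count_measure (Pow {..<N})))
           {S \<in> PiE {..<n} (\<lambda>_. Pow {..<N}). \<exists>j<N. \<forall>i<n. j \<notin> S i} \<ge> 1/2"
proof -
  let ?O = "PiE {..<n} (\<lambda>_. Pow {..<N})"
  let ?G = "{S \<in> ?O. \<exists>j<N. \<forall>i<n. j \<notin> S i}"
  let ?C = "{S \<in> ?O. \<forall>j<N. \<exists>i<n. j \<in> S i}"
  have N1: "N \<ge> 1" unfolding N_def by simp
  have finO: "finite ?O" by (intro finite_PiE) auto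
  have r: "real (2 ^ n - 1 :: nat) = real N - 1" unfolding N_def by (simp add: of_nat_diff)
  have cO: "card ?O = (2 ^ N) ^ n" by (simp add: card_PiE card_Pow)
  have "?O = ?G \<union> ?C" by auto
  moreover have "?G \<inter> ?C = {}" by auto
  ultimately have "card ?O = card ?G + card ?C"
    using finO by (metis (no_types, lifting) card_Un_disjoint finite_Un)
  then have "real (card ?O) = real (card ?G) + real (card ?C)" by simp
  moreover have "real (card ?C) = (real N - 1) ^ N"
    unfolding card_cover[of n N] of_nat_power r by simp
  ultimately have cG: "real (card ?G) = (2 ^ N) ^ n - (real N - 1) ^ N"
    unfolding cO by simp
  have m: "measure (PiM {..<n} (\<lambda>_. uniform_count_measure (Pow {..<N}))) ?G = card ?G / card (Pow {..<N}) ^ card {..<n}"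
    by (rule PiM_unif(2)) auto
  have p: "((2::real) ^ N) ^ n = (2 ^ n) ^ N" by (simp add: power_mult[symmetric] mult.commute)
  have "measure (PiM {..<n} (\<lambda>_. uniform_count_measure (Pow {..<N}))) ?G = ((2 ^ N) ^ n - (real N - 1) ^ N) / (2 ^ N) ^ n"
    unfolding m using cG by (simp add: card_Pow)
  also have "\<dots> = 1 - (real N - 1) ^ N / real N ^ N"
    using p by (simp add: diff_divide_distrib N_def)
  also have "(real N - 1) ^ N / real N ^ N = (1 - 1 / real N) ^ N"
    using N1 by (simp add: power_divide[symmetric] diff_divide_distrib)
  finally show ?thesis using exp_bound[OF N1] by simp
qed



definition Fe :: "real \<Rightarrow> nat \<Rightarrow> (nat \<Rightarrow> 'a::euclidean_space set) \<Rightarrow> 'a \<Rightarrow> real" where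
  "Fe r n Ks w = (\<Sum>i<n. fK r (Ks i) w) / real n"

lemma fK_cont: "continuous_on UNIV (fK r K)"
  by (metis continuous_at_imp_continuous_on fK_deriv has_derivative_continuous)

lemma Fe_cont: "continuous_on UNIV (Fe r n Ks)"
proof -
  have e: "Fe r n Ks = (\<lambda>w. inverse (real n) * (\<Sum>i<n. fK r (Ks i) w))"
    by (simp add: Fe_def[abs_def] divide_inverse mult.commute)
  have "continuous_on UNIV (\<lambda>w. \<Sum>i<n. fK r (Ks i) w)"
    by (rule continuous_on_sum, rule fK_cont)
  then show ?thesis unfolding e by (intro continuous_on_mult continuous_on_const)
qed

lemma bdd_shift:
  fixes g :: "'a::euclidean_space \<Rightarrow> real"
  assumes "continuous_on UNIV g"
  shows "bdd_above ((\<lambda>v. g (w + v)) ` cball 0 r)"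
proof -
  have "continuous_on (cball 0 r) (\<lambda>v. g (w + v))"
    by (rule continuous_on_compose2[OF assms]) (auto intro: continuous_intros)
  then have "compact ((\<lambda>v. g (w + v)) ` cball 0 r)"
    by (intro compact_continuous_image) auto
  then show ?thesis by (intro bounded_imp_bdd_above compact_imp_bounded)
qed

lemma Fe_nonneg: "0 \<le> Fe r n Ks w"
  by (simp add: Fe_def sum_nonneg fK_nonneg)

lemma Fe_even: "Fe r n Ks (- w) = Fe r n Ks w"
  by (simp add: Fe_def fK_even)

lemma Fe_shift:
  assumes "\<And>i. i < n \<Longrightarrow> Ks i \<subseteq> Basis" "b0 \<in> Basis" "\<And>i. i < n \<Longrightarrow> b0 \<notin> Ks i"
  shows "Fe r n Ks (w + c *\<^sub>R b0) = Fe r n Ks w"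
  unfolding Fe_def using assms by (simp add: fK_shift)

lemma Fe_flat:
  assumes "\<And>i. i < n \<Longrightarrow> Ks i \<subseteq> Basis" "norm w \<le> r"
  shows "Fe r n Ks w = 0"
  unfolding Fe_def using assms by (simp add: fK_flat)

lemma Fe_mid:
  assumes "0 \<le> r"
  shows "Fe r n Ks v \<le> (Fe r n Ks (w + v) + Fe r n Ks (w - v)) / 2"
proof -
  have "fK r K v \<le> (fK r K (w + v) + fK r K (- (w - v))) / 2" for K :: "'a set"
  proof -
    have "v = (1 - 1/2) *\<^sub>R (w + v) + (1/2) *\<^sub>R (- (w - v))" by (simp add: algebra_simps flip: scaleR_add_left)
    then have "fK r K v = fK r K ((1 - 1/2) *\<^sub>R (w + v) + (1/2) *\<^sub>R (- (w - v)))" by simp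
    also have "\<dots> \<le> (1 - 1/2) * fK r K (w + v) + (1/2) * fK r K (- (w - v))"
      by (rule convex_onD[OF fK_convex[OF assms]]) auto
    finally show ?thesis by simp
  qed
  then have "fK r K v \<le> (fK r K (w + v) + fK r K (w - v)) / 2" for K :: "'a set"
    by (metis fK_even)
  then have "(\<Sum>i<n. fK r (Ks i) v) \<le> (\<Sum>i<n. (fK r (Ks i) (w + v) + fK r (Ks i) (w - v)) / 2)"
    by (intro sum_mono)
  then have h: "(\<Sum>i<n. fK r (Ks i) v) \<le> ((\<Sum>i<n. fK r (Ks i) (w + v)) + (\<Sum>i<n. fK r (Ks i) (w - v))) / 2"
    by (simp add: sum.distrib sum_divide_distrib[symmetric])
  have "(\<Sum>i<n. fK r (Ks i) v) / real n \<le> (((\<Sum>i<n. fK r (Ks i) (w + v)) + (\<Sum>i<n. fK r (Ks i) (w - v))) / 2) / real n"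
    by (rule divide_right_mono[OF h]) simp
  also have "\<dots> = ((\<Sum>i<n. fK r (Ks i) (w + v)) / real n + (\<Sum>i<n. fK r (Ks i) (w - v)) / real n) / 2"
    by (cases "n = 0") (simp_all add: field_simps)
  finally show ?thesis unfolding Fe_def .
qed

lemma Fe_sa_min:
  assumes Ks: "\<And>i. i < n \<Longrightarrow> Ks i \<subseteq> Basis" and b0: "b0 \<in> Basis" "\<And>i. i < n \<Longrightarrow> b0 \<notin> Ks i"
    and r: "0 \<le> r" "0 \<le> s"
  shows "sa_risk (Fe r n Ks) s b0 \<le> sa_risk (Fe r n Ks) s w"
  unfolding sa_risk_def
proof (rule cSUP_least)
  show "cball (0::'a) s \<noteq> {}" using r by simp
  fix v :: 'a assume v: "v \<in> cball 0 s"
  have "Fe r n Ks (b0 + v) = Fe r n Ks v"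
    using Fe_shift[OF Ks b0, where w=v and c=1] by (simp add: add.commute)
  also have "\<dots> \<le> (Fe r n Ks (w + v) + Fe r n Ks (w + (- v))) / 2"
    using Fe_mid[OF r(1)] by simp
  also have "\<dots> \<le> (Sup ((\<lambda>v. Fe r n Ks (w + v)) ` cball 0 s) + Sup ((\<lambda>v. Fe r n Ks (w + v)) ` cball 0 s)) / 2"
    using v by (intro divide_right_mono add_mono cSUP_upper bdd_shift Fe_cont) auto
  finally show "Fe r n Ks (b0 + v) \<le> (SUP v\<in>cball 0 s. Fe r n Ks (w + v))" by simp
qed

lemma fK_line:
  assumes "K \<subseteq> Basis" "bN \<in> K" "0 \<le> r"
  shows "fK r K (t *\<^sub>R bN) = phi r t"
proof -
  have "fK r K (t *\<^sub>R bN) = (\<Sum>b\<in>K. if b = bN then phi r t else 0)"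
    unfolding fK_def
  proof (intro sum.cong refl)
    fix b assume "b \<in> K"
    then show "phi r (t *\<^sub>R bN \<bullet> b) = (if b = bN then phi r t else 0)"
      using assms by (auto simp: inner_Basis subsetD phi_zero)
  qed
  also have "\<dots> = phi r t"
    using assms finite_subset[OF assms(1)] by simp
  finally show ?thesis .
qed



lemma card_Pow_mem:
  assumes "finite A" "j \<in> A"
  shows "card {z \<in> Pow A. j \<in> z} = 2 ^ (card A - 1)"
proof -
  have "{z \<in> Pow A. j \<in> z} = insert j ` Pow (A - {j})"
  proof
    show "{z \<in> Pow A. j \<in> z} \<subseteq> insert j ` Pow (A - {j})"
    proof
      fix z assume "z \<in> {z \<in> Pow A. j \<in> z}"
      then have "z = insert j (z - {j})" "z - {j} \<in> Pow (A - {j})" by auto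
      then show "z \<in> insert j ` Pow (A - {j})" by blast
    qed
    show "insert j ` Pow (A - {j}) \<subseteq> {z \<in> Pow A. j \<in> z}" using assms by auto
  qed
  moreover have "inj_on (insert j) (Pow (A - {j}))"
  proof (rule inj_onI)
    fix x y assume "x \<in> Pow (A - {j})" "y \<in> Pow (A - {j})" "insert j x = insert j y"
    then show "x = y" by (metis Diff_iff PowD insertI1 insert_ident subsetD singletonI)
  qed
  ultimately have "card {z \<in> Pow A. j \<in> z} = card (Pow (A - {j}))"
    by (simp add: card_image)
  also have "\<dots> = 2 ^ (card A - 1)" using assms by (simp add: card_Pow)
  finally show ?thesis .
qed

theorem mainTheorem1:
  fixes n :: nat and \<rho> :: real
  assumes "n \<ge> 1"
    and "DIM('a::euclidean_space) = 2 ^ n + 1"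
    and "0 \<le> \<rho>" and "\<rho> \<le> 1/2"
  shows "\<exists>(D :: nat set measure) (f :: 'a \<Rightarrow> nat set \<Rightarrow> real) wstar.
    prob_space D \<and>
    (\<forall>w. integrable D (f w)) \<and>
    (\<forall>z\<in>space D.
        (\<forall>w. f w z \<ge> 0) \<and> convex_on UNIV (\<lambda>w. f w z) \<and>
        1-lipschitz_on (cball 0 1) (\<lambda>w. f w z) \<and>
        smooth_fun 1 (\<lambda>w. f w z) \<and> flat_fun (\<lambda>w. f w z) \<rho>) \<and>
    wstar \<in> argmin_on (cball 0 1) (pop_risk f D) \<and>
    measure (PiM {..<n} (\<lambda>_. D))
      {S \<in> space (PiM {..<n} (\<lambda>_. D)).
        \<exists>w1 w2. w1 \<in> argmin_on (cball 0 1) (emp_risk f n S) \<and>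
                w2 \<in> argmin_on (cball 0 1) (emp_risk f n S) \<and>
                (\<forall>r\<ge>0. w1 \<in> argmin_on (cball 0 1) (sa_risk (emp_risk f n S) r)) \<and>
                (\<forall>r. 0 \<le> r \<and> r \<le> \<rho> \<longrightarrow> flat_min (emp_risk f n S) r w1) \<and>
                (\<forall>\<delta>>0. sa_risk (emp_risk f n S) \<delta> w2 \<ge> emp_risk f n S w2 + \<delta>\<^sup>2 / 2) \<and>
                pop_risk f D w1 - pop_risk f D wstar \<ge> 1/16 \<and>
                pop_risk f D w2 - pop_risk f D wstar = 0}
      \<ge> 1/2"
proof -
  note n1 = assms(1) and rho = assms(3,4)
  define N where "N = (2::nat) ^ n"
  have N1: "N \<ge> 1" unfolding N_def by simp
  have cB: "card (Basis :: 'a set) = N + 1" using assms(2) N_def by simp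
  obtain e where e: "bij_betw e {0..<N+1} (Basis :: 'a set)"
    using ex_bij_betw_nat_finite[of "Basis :: 'a set"] cB by auto
  have einj: "inj_on e {0..<N+1}" using e by (simp add: bij_betw_def)
  have eB: "e k \<in> Basis" if "k \<le> N" for k
    using e that by (auto simp: bij_betw_def)
  define K where "K z = e ` insert N (z \<inter> {..<N})" for z :: "nat set"
  have KB: "K z \<subseteq> Basis" for z unfolding K_def using eB by auto
  have eNK: "e N \<in> K z" for z unfolding K_def by auto
  have ejK: "e j \<in> K z \<longleftrightarrow> j \<in> z" if "j < N" for j z
  proof
    assume "e j \<in> K z"
    then obtain k where k: "k \<in> insert N (z \<inter> {..<N})" "e j = e k" unfolding K_def by auto
    then have "j = k" using einj that by (auto dest: inj_onD)
    then show "j \<in> z" using k that by auto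
  next
    assume "j \<in> z" then show "e j \<in> K z" unfolding K_def using that by auto
  qed
  define D where "D = uniform_count_measure (Pow {..<N})"
  define f where "f w z = fK \<rho> (K z) w" for w :: 'a and z
  have emp: "emp_risk f n S = Fe \<rho> n (\<lambda>i. K (S i))" for S
    by (simp add: fun_eq_iff emp_risk_def Fe_def f_def)
  have pop: "pop_risk f D w = (\<Sum>z\<in>Pow {..<N}. f w z) / 2 ^ N" for w
    by (simp add: pop_risk_def D_def integral_uniform_count_measure card_Pow)
  have f0: "f 0 z = 0" for z unfolding f_def using rho by (intro fK_flat KB) auto
  have pop0: "pop_risk f D 0 = 0" unfolding pop f0 by simp
  have popnn: "pop_risk f D w \<ge> 0" for w unfolding pop f_def by (intro divide_nonneg_pos sum_nonneg fK_nonneg) auto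
  have spD: "space (PiM {..<n} (\<lambda>_. D)) = PiE {..<n} (\<lambda>_. Pow {..<N})"
    by (simp add: space_PiM D_def space_uniform_count_measure)
  let ?O = "PiE {..<n} (\<lambda>_. Pow {..<N})"
  let ?G = "{S \<in> ?O. \<exists>j<N. \<forall>i<n. j \<notin> S i}"
  let ?T = "{S \<in> space (PiM {..<n} (\<lambda>_. D)).
        \<exists>w1 w2. w1 \<in> argmin_on (cball 0 1) (emp_risk f n S) \<and>
                w2 \<in> argmin_on (cball 0 1) (emp_risk f n S) \<and>
                (\<forall>r\<ge>0. w1 \<in> argmin_on (cball 0 1) (sa_risk (emp_risk f n S) r)) \<and>
                (\<forall>r. 0 \<le> r \<and> r \<le> \<rho> \<longrightarrow> flat_min (emp_risk f n S) r w1) \<and>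
                (\<forall>\<delta>>0. sa_risk (emp_risk f n S) \<delta> w2 \<ge> emp_risk f n S w2 + \<delta>\<^sup>2 / 2) \<and>
                pop_risk f D w1 - pop_risk f D 0 \<ge> 1/16 \<and>
                pop_risk f D w2 - pop_risk f D 0 = 0}"
  have GT: "?G \<subseteq> ?T"
  proof
    fix S assume "S \<in> ?G"
    then obtain j where SO: "S \<in> ?O" and j: "j < N" "\<And>i. i < n \<Longrightarrow> j \<notin> S i" by auto
    define Ks where "Ks i = K (S i)" for i
    have KsB: "\<And>i. i < n \<Longrightarrow> Ks i \<subseteq> Basis" using KB Ks_def by auto
    have ejB: "e j \<in> Basis" using eB j by simp
    have ejn: "\<And>i. i < n \<Longrightarrow> e j \<notin> Ks i" using ejK j Ks_def by auto
    have eNB: "e N \<in> Basis" using eB by simp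
    have E: "emp_risk f n S = Fe \<rho> n Ks" unfolding emp Ks_def by simp
    have Fe0: "Fe \<rho> n Ks 0 = 0" using KsB rho by (intro Fe_flat) auto
    have Fej: "Fe \<rho> n Ks (e j) = 0"
      using Fe_shift[OF KsB ejB ejn, where w=0 and c=1] Fe0 by simp
    have w2: "Fe \<rho> n Ks (\<rho> *\<^sub>R e N) = 0"
      using KsB rho eNB by (intro Fe_flat) (auto simp: norm_Basis)
    have argmin1: "e j \<in> argmin_on (cball 0 1) (Fe \<rho> n Ks)"
      unfolding argmin_on_def using Fej Fe_nonneg ejB by (auto simp: norm_Basis)
    have argmin2: "\<rho> *\<^sub>R e N \<in> argmin_on (cball 0 1) (Fe \<rho> n Ks)"
      unfolding argmin_on_def using w2 Fe_nonneg eNB rho by (auto simp: norm_Basis)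
    have sa1: "\<forall>r\<ge>0. e j \<in> argmin_on (cball 0 1) (sa_risk (Fe \<rho> n Ks) r)"
      unfolding argmin_on_def using ejB Fe_sa_min[OF KsB ejB ejn] rho by (auto simp: norm_Basis)
    have flat1: "\<forall>r. 0 \<le> r \<and> r \<le> \<rho> \<longrightarrow> flat_min (Fe \<rho> n Ks) r (e j)"
      unfolding flat_min_def
    proof (intro allI impI)
      fix r w assume r: "0 \<le> r \<and> r \<le> \<rho>" and w: "norm (w - e j) \<le> r"
      have "Fe \<rho> n Ks w = Fe \<rho> n Ks ((w - e j) + 1 *\<^sub>R e j)" by simp
      also have "\<dots> = Fe \<rho> n Ks (w - e j)" by (rule Fe_shift[OF KsB ejB ejn])
      also have "\<dots> = 0" using KsB r w by (intro Fe_flat) auto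
      finally show "Fe \<rho> n Ks w = 0" .
    qed
    have sharp: "\<forall>\<delta>>0. sa_risk (Fe \<rho> n Ks) \<delta> (\<rho> *\<^sub>R e N) \<ge> Fe \<rho> n Ks (\<rho> *\<^sub>R e N) + \<delta>\<^sup>2 / 2"
    proof (intro allI impI)
      fix \<delta> :: real assume d: "\<delta> > 0"
      have "Fe \<rho> n Ks (\<rho> *\<^sub>R e N + \<delta> *\<^sub>R e N) = Fe \<rho> n Ks ((\<rho> + \<delta>) *\<^sub>R e N)"
        by (simp add: scaleR_add_left)
      also have "\<dots> = (\<Sum>i<n. phi \<rho> (\<rho> + \<delta>)) / real n"
        unfolding Fe_def using KsB eNK rho Ks_def by (simp add: fK_line)
      also have "\<dots> = \<delta>\<^sup>2 / 2" using n1 phi_at[of \<rho> \<delta>] rho d by simp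
      finally have eq: "Fe \<rho> n Ks (\<rho> *\<^sub>R e N + \<delta> *\<^sub>R e N) = \<delta>\<^sup>2 / 2" .
      have "\<delta>\<^sup>2 / 2 \<le> (SUP v\<in>cball 0 \<delta>. Fe \<rho> n Ks (\<rho> *\<^sub>R e N + v))"
        unfolding eq[symmetric]
        by (rule cSUP_upper) (use d eNB in \<open>auto simp: norm_Basis intro: bdd_shift Fe_cont\<close>)
      then show "sa_risk (Fe \<rho> n Ks) \<delta> (\<rho> *\<^sub>R e N) \<ge> Fe \<rho> n Ks (\<rho> *\<^sub>R e N) + \<delta>\<^sup>2 / 2"
        unfolding sa_risk_def w2 by simp
    qed
    have fej: "f (e j) z = (if j \<in> z then phi \<rho> 1 else 0)" for z
    proof (cases "j \<in> z")
      case True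
      then have "e j \<in> K z" using ejK j by simp
      then show ?thesis unfolding f_def using fK_line[OF KB _ rho(1), of "e j" z 1] True by simp
    next
      case False
      then have "e j \<notin> K z" using ejK j by simp
      then have "f (e j) z = f (0 + 1 *\<^sub>R e j) z" by simp
      also have "\<dots> = f 0 z" unfolding f_def by (rule fK_shift[OF KB ejB \<open>e j \<notin> K z\<close>])
      finally show ?thesis using f0 False by simp
    qed
    have "pop_risk f D (e j) = phi \<rho> 1 * card {z \<in> Pow {..<N}. j \<in> z} / 2 ^ N"
      unfolding pop fej by (simp add: sum.If_cases) (rule disjI2, rule arg_cong[where f=card], auto)
    also have "\<dots> = phi \<rho> 1 * 2 ^ (N - 1) / 2 ^ N"
      using card_Pow_mem[of "{..<N}" j] j by simp
    also have "\<dots> = phi \<rho> 1 / 2"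
      using N1 by (simp add: power_diff)
    finally have popj: "pop_risk f D (e j) = phi \<rho> 1 / 2" .
    have "phi \<rho> 1 = (1 - \<rho>)\<^sup>2 / 2" using phi_at[of \<rho> "1 - \<rho>"] rho by simp
    moreover have "(1/2)\<^sup>2 \<le> (1 - \<rho>)\<^sup>2" using rho by (intro power_mono) auto
    ultimately have gap: "pop_risk f D (e j) - pop_risk f D 0 \<ge> 1/16"
      unfolding popj pop0 by (simp add: power2_eq_square)
    have pop2: "pop_risk f D (\<rho> *\<^sub>R e N) - pop_risk f D 0 = 0"
    proof -
      have "f (\<rho> *\<^sub>R e N) z = 0" for z
        unfolding f_def using KB rho eNB by (intro fK_flat) (auto simp: norm_Basis)
      then show ?thesis unfolding pop pop0 using f0 by simp
    qed
    have ex: "\<exists>w1 w2. w1 \<in> argmin_on (cball 0 1) (emp_risk f n S) \<and>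
                w2 \<in> argmin_on (cball 0 1) (emp_risk f n S) \<and>
                (\<forall>r\<ge>0. w1 \<in> argmin_on (cball 0 1) (sa_risk (emp_risk f n S) r)) \<and>
                (\<forall>r. 0 \<le> r \<and> r \<le> \<rho> \<longrightarrow> flat_min (emp_risk f n S) r w1) \<and>
                (\<forall>\<delta>>0. sa_risk (emp_risk f n S) \<delta> w2 \<ge> emp_risk f n S w2 + \<delta>\<^sup>2 / 2) \<and>
                pop_risk f D w1 - pop_risk f D 0 \<ge> 1/16 \<and>
                pop_risk f D w2 - pop_risk f D 0 = 0"
      unfolding E
      by (rule exI[of _ "e j"], rule exI[of _ "\<rho> *\<^sub>R e N"]) (use argmin1 argmin2 sa1 flat1 sharp gap pop2 in blast)
    show "S \<in> ?T" using SO spD ex by blast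
  qed
  have TO: "?T \<subseteq> ?O" using spD by auto
  have mT: "measure (PiM {..<n} (\<lambda>_. D)) ?T = card ?T / card (Pow {..<N}) ^ card {..<n}"
    by (rule PiM_unif(2)[of "Pow {..<N}" "{..<n}" ?T, folded D_def]) (use TO in auto)
  have mG: "measure (PiM {..<n} (\<lambda>_. D)) ?G = card ?G / card (Pow {..<N}) ^ card {..<n}"
    by (rule PiM_unif(2)[of "Pow {..<N}" "{..<n}" ?G, folded D_def]) auto
  have "finite ?O" by (intro finite_PiE) auto
  then have "card ?G \<le> card ?T" using GT TO by (intro card_mono) (auto intro: finite_subset)
  then have "measure (PiM {..<n} (\<lambda>_. D)) ?G \<le> measure (PiM {..<n} (\<lambda>_. D)) ?T"
    unfolding mT mG by (intro divide_right_mono) auto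
  moreover have "measure (PiM {..<n} (\<lambda>_. D)) ?G \<ge> 1/2"
    using prob_uncovered[of n] unfolding D_def N_def by simp
  ultimately have meas: "measure (PiM {..<n} (\<lambda>_. D)) ?T \<ge> 1/2" by linarith
  show ?thesis
  proof (intro exI conjI)
    show "prob_space D" unfolding D_def by (rule prob_space_uniform_count_measure) auto
    show "\<forall>w. integrable D (f w)"
      unfolding D_def uniform_count_measure_def by (auto intro: integrable_point_measure_finite)
    show "\<forall>z\<in>space D.
        (\<forall>w. f w z \<ge> 0) \<and> convex_on UNIV (\<lambda>w. f w z) \<and>
        1-lipschitz_on (cball 0 1) (\<lambda>w. f w z) \<and>
        smooth_fun 1 (\<lambda>w. f w z) \<and> flat_fun (\<lambda>w. f w z) \<rho>"
      unfolding f_def using KB rho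
      by (auto simp: fK_nonneg fK_convex fK_lipschitz fK_smooth fK_flat_fun)
    show "0 \<in> argmin_on (cball 0 1) (pop_risk f D)"
      unfolding argmin_on_def using pop0 popnn by auto
    show "measure (PiM {..<n} (\<lambda>_. D)) ?T \<ge> 1/2" by (rule meas)
  qed
qed

end
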